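(* Let $G$ be a connected graph with a fixed vertex $w$. Take a cycle $C_c$ of length $c \geq 7$, vertex-disjoint from $G$, and identify one vertex of the cycle with $w$; denote the resulting graph by $G^*$. Let $v_1$ be a neighbor of $w$ on the cycle $C_c$. Then $\delta_{G^*}(w) = t_{G^*}(w) - t_{G^*-v_1}(w)\leq -2$.
   Context: All graphs are finite, simple, undirected. For a graph $H$ and vertex $x$, the transmission is $t_H(x)=\sum_{y\in V(H)}\mathrm{dist}_H(x,y)$; $H-v$ denotes $H$ with vertex $v$ and its incident edges deleted. The quantity $\delta_{G^*}(w)$ is taken with respect to the vertex $v_1$, i.e. $\delta_{G^*}(w)=t_{G^*}(w)-t_{G^*-v_1}(w)$. *)

theory Defs
  imports Main
begin

definition simple_graph :: "'a set \<Rightarrow> 'a set set \<Rightarrow> bool" where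
  "simple_graph V E \<longleftrightarrow> finite V \<and>
     (\<forall>e\<in>E. \<exists>x y. e = {x, y} \<and> x \<noteq> y \<and> x \<in> V \<and> y \<in> V)"

definition walk :: "'a set \<Rightarrow> 'a set set \<Rightarrow> 'a list \<Rightarrow> bool" where
  "walk V E xs \<longleftrightarrow> xs \<noteq> [] \<and> set xs \<subseteq> V \<and>
     (\<forall>i. Suc i < length xs \<longrightarrow> {xs ! i, xs ! Suc i} \<in> E)"

definition connected_graph :: "'a set \<Rightarrow> 'a set set \<Rightarrow> bool" where
  "connected_graph V E \<longleftrightarrow> V \<noteq> {} \<and>
     (\<forall>x\<in>V. \<forall>y\<in>V. \<exists>xs. walk V E xs \<and> hd xs = x \<and> last xs = y)"

definition dist :: "'a set \<Rightarrow> 'a set set \<Rightarrow> 'a \<Rightarrow> 'a \<Rightarrow> nat" where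
  "dist V E x y = (LEAST n. \<exists>xs. walk V E xs \<and> hd xs = x \<and> last xs = y \<and> length xs = Suc n)"

definition transmission :: "'a set \<Rightarrow> 'a set set \<Rightarrow> 'a \<Rightarrow> nat" where
  "transmission V E x = (\<Sum>y\<in>V. dist V E x y)"

definition del_vertex_V :: "'a set \<Rightarrow> 'a \<Rightarrow> 'a set" where
  "del_vertex_V V v = V - {v}"

definition del_vertex_E :: "'a set set \<Rightarrow> 'a \<Rightarrow> 'a set set" where
  "del_vertex_E E v = {e \<in> E. v \<notin> e}"

text \<open>Gluing a cycle of length c at w: the cycle is w = cyc 0, u 1, ..., u (c-1), back to w.\<close>
definition cyc :: "'a \<Rightarrow> (nat \<Rightarrow> 'a) \<Rightarrow> nat \<Rightarrow> 'a" where
  "cyc w u i = (if i = 0 then w else u i)"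

definition glue_V :: "'a set \<Rightarrow> (nat \<Rightarrow> 'a) \<Rightarrow> nat \<Rightarrow> 'a set" where
  "glue_V V u c = V \<union> u ` {1..<c}"

definition glue_E :: "'a set set \<Rightarrow> 'a \<Rightarrow> (nat \<Rightarrow> 'a) \<Rightarrow> nat \<Rightarrow> 'a set set" where
  "glue_E E w u c = E \<union> {{cyc w u i, cyc w u (Suc i mod c)} | i. i < c}"

end

theory Submission
  imports Defs
begin

definition reach :: "'a set \<Rightarrow> 'a set set \<Rightarrow> 'a \<Rightarrow> 'a \<Rightarrow> bool" where
  "reach V E x y \<longleftrightarrow> (\<exists>xs. walk V E xs \<and> hd xs = x \<and> last xs = y)"

lemma dist_le_walk:
  assumes "walk V E xs" "hd xs = x" "last xs = y" "length xs = Suc n"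
  shows "dist V E x y \<le> n"
  unfolding dist_def by (rule Least_le) (use assms in blast)

lemma dist_walk:
  assumes "reach V E x y"
  shows "\<exists>xs. walk V E xs \<and> hd xs = x \<and> last xs = y \<and> length xs = Suc (dist V E x y)"
proof -
  from assms obtain xs where xs: "walk V E xs" "hd xs = x" "last xs = y"
    unfolding reach_def by blast
  then have "length xs = Suc (length xs - 1)" unfolding walk_def by (cases xs) auto
  with xs have "\<exists>n xs. walk V E xs \<and> hd xs = x \<and> last xs = y \<and> length xs = Suc n" by blast
  then show ?thesis unfolding dist_def by (rule LeastI_ex)
qed

lemma walk_mono:
  assumes "walk V E xs" "V \<subseteq> V'" "E \<subseteq> E'"
  shows "walk V' E' xs"
  using assms unfolding walk_def by blast

lemma dist_mono:
  assumes "reach V' E' x y" "V' \<subseteq> V" "E' \<subseteq> E"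
  shows "dist V E x y \<le> dist V' E' x y"
proof -
  from dist_walk[OF assms(1)] obtain xs where
    xs: "walk V' E' xs" "hd xs = x" "last xs = y" "length xs = Suc (dist V' E' x y)" by blast
  show ?thesis by (rule dist_le_walk[OF walk_mono[OF xs(1) assms(2,3)] xs(2-4)])
qed

lemma reach_refl: "x \<in> V \<Longrightarrow> reach V E x x"
  unfolding reach_def walk_def by (rule exI[of _ "[x]"]) auto

lemma reach_step:
  assumes "reach V E x y" "{y, z} \<in> E" "z \<in> V"
  shows "reach V E x z"
proof -
  from assms(1) obtain xs where xs: "walk V E xs" "hd xs = x" "last xs = y"
    unfolding reach_def by blast
  have ne: "xs \<noteq> []" using xs(1) unfolding walk_def by auto
  have "walk V E (xs @ [z])"
    unfolding walk_def
  proof (intro conjI allI impI)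
    show "xs @ [z] \<noteq> []" by simp
    show "set (xs @ [z]) \<subseteq> V" using xs(1) assms(3) unfolding walk_def by auto
  next
    fix i assume i: "Suc i < length (xs @ [z])"
    show "{(xs @ [z]) ! i, (xs @ [z]) ! Suc i} \<in> E"
    proof (cases "Suc i < length xs")
      case True
      then show ?thesis using xs(1) unfolding walk_def by (auto simp: nth_append)
    next
      case False
      then have "i = length xs - 1" using i by simp
      then have "(xs @ [z]) ! i = y" "(xs @ [z]) ! Suc i = z"
        using ne xs(3) by (auto simp: nth_append last_conv_nth)
      then show ?thesis using assms(2) by simp
    qed
  qed
  moreover have "hd (xs @ [z]) = x" "last (xs @ [z]) = z" using ne xs by auto
  ultimately show ?thesis unfolding reach_def by blast
qed

lemma walk_tl:
  assumes "walk V E (x # xs)" "xs \<noteq> []"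
  shows "walk V E xs" "{x, hd xs} \<in> E"
proof -
  show "walk V E xs" using assms unfolding walk_def
    by (auto simp del: nth_Cons_Suc)
  have "{(x#xs) ! 0, (x#xs) ! Suc 0} \<in> E" using assms unfolding walk_def by auto
  then show "{x, hd xs} \<in> E" using assms(2) by (cases xs) auto
qed

lemma walk_potential:
  fixes f :: "'a \<Rightarrow> int"
  assumes "walk V E xs" "\<forall>e\<in>E. \<forall>a b. e = {a, b} \<longrightarrow> \<bar>f a - f b\<bar> \<le> 1"
  shows "\<bar>f (last xs) - f (hd xs)\<bar> \<le> int (length xs) - 1"
  using assms(1)
proof (induction xs)
  case Nil
  then show ?case unfolding walk_def by simp
next
  case (Cons x xs)
  show ?case
  proof (cases "xs = []")
    case True then show ?thesis by simp
  next
    case False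
    from walk_tl[OF Cons.prems False] have w: "walk V E xs" "{x, hd xs} \<in> E" by auto
    have "\<bar>f x - f (hd xs)\<bar> \<le> 1" using assms(2) w(2) by blast
    with Cons.IH[OF w(1)] False show ?thesis by simp
  qed
qed

lemma dist_potential:
  fixes f :: "'a \<Rightarrow> int"
  assumes "reach V E x y" "\<forall>e\<in>E. \<forall>a b. e = {a, b} \<longrightarrow> \<bar>f a - f b\<bar> \<le> 1"
  shows "\<bar>f y - f x\<bar> \<le> int (dist V E x y)"
proof -
  from dist_walk[OF assms(1)] obtain xs where
    xs: "walk V E xs" "hd xs = x" "last xs = y" "length xs = Suc (dist V E x y)" by blast
  from walk_potential[OF xs(1) assms(2)] xs show ?thesis by simp
qed

lemma key:
  assumes fin: "finite Vs" and v1: "v1 \<in> Vs" and x2: "x2 \<in> Vs" "x2 \<noteq> v1"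
    and d1: "dist Vs Es w v1 \<le> 1" and d2: "dist Vs Es w x2 \<le> 2"
    and d3: "dist V' E' w x2 \<ge> 5"
    and V': "V' = Vs - {v1}" and E': "E' \<subseteq> Es"
    and R: "\<forall>y\<in>V'. reach V' E' w y"
  shows "int (transmission Vs Es w) - int (transmission V' E' w) \<le> -2"
proof -
  let ?d = "dist Vs Es w" and ?d' = "dist V' E' w"
  have T: "transmission Vs Es w = ?d v1 + (?d x2 + sum ?d (Vs - {v1} - {x2}))"
    unfolding transmission_def
    using fin v1 x2 by (simp add: sum.remove[of Vs v1] sum.remove[of "Vs - {v1}" x2])
  have T': "transmission V' E' w = ?d' x2 + sum ?d' (Vs - {v1} - {x2})"
    unfolding transmission_def V'
    using fin v1 x2 by (simp add: sum.remove[of "Vs - {v1}" x2])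
  have "sum ?d (Vs - {v1} - {x2}) \<le> sum ?d' (Vs - {v1} - {x2})"
  proof (rule sum_mono)
    fix y assume "y \<in> Vs - {v1} - {x2}"
    then show "?d y \<le> ?d' y" using R V' E' by (intro dist_mono) auto
  qed
  then have "transmission Vs Es w + 2 \<le> transmission V' E' w" using T T' d1 d2 d3 by linarith
  then show ?thesis by simp
qed

lemma edge_in:
  "i < c \<Longrightarrow> {cyc w u i, cyc w u (Suc i mod c)} \<in> glue_E E w u c"
  unfolding glue_E_def by blast

lemma del_in: "e \<in> E \<Longrightarrow> v \<notin> e \<Longrightarrow> e \<in> del_vertex_E E v"
  unfolding del_vertex_E_def by blast

lemma walk2: "a \<in> V \<Longrightarrow> b \<in> V \<Longrightarrow> {a, b} \<in> E \<Longrightarrow> walk V E [a, b]"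
  unfolding walk_def by (auto simp: less_Suc_eq)

lemma walk3: "a \<in> V \<Longrightarrow> b \<in> V \<Longrightarrow> d \<in> V \<Longrightarrow> {a, b} \<in> E \<Longrightarrow> {b, d} \<in> E
   \<Longrightarrow> walk V E [a, b, d]"
  unfolding walk_def by (auto simp: less_Suc_eq)

theorem lemma2:
  fixes V :: "'a set" and E :: "'a set set" and w :: 'a
    and u :: "nat \<Rightarrow> 'a" and c :: nat and v1 :: 'a
  assumes "simple_graph V E" and "connected_graph V E" and "w \<in> V"
    and "c \<ge> 7"
    and "inj_on u {1..<c}" and "u ` {1..<c} \<inter> V = {}"
    and "v1 = u 1 \<or> v1 = u (c - 1)"
  shows "int (transmission (glue_V V u c) (glue_E E w u c) w)
         - int (transmission (del_vertex_V (glue_V V u c) v1) (del_vertex_E (glue_E E w u c) v1) w)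
         \<le> -2"
proof -
  note sg = assms(1) and conn = assms(2) and wV = assms(3) and c7 = assms(4)
    and inj = assms(5) and disj = assms(6) and v1c = assms(7)
  define Vs where "Vs = glue_V V u c"
  define Es where "Es = glue_E E w u c"
  define V' where "V' = del_vertex_V Vs v1"
  define E' where "E' = del_vertex_E Es v1"
  have finV: "finite V" using sg unfolding simple_graph_def by blast
  have finVs: "finite Vs" unfolding Vs_def glue_V_def using finV by simp
  have uV: "u j \<notin> V" if "j \<in> {1..<c}" for j using disj that by blast
  have uVs: "u j \<in> Vs" if "j \<in> {1..<c}" for j using that unfolding Vs_def glue_V_def by blast
  have wVs: "w \<in> Vs" using wV unfolding Vs_def glue_V_def by blast
  have cyc0: "cyc w u 0 = w" unfolding cyc_def by simp
  have cycS: "i \<noteq> 0 \<Longrightarrow> cyc w u i = u i" for i unfolding cyc_def by simp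
  have EV: "a \<in> V" if "e \<in> E" "a \<in> e" for e a
  proof -
    from sg that(1) obtain x y where "e = {x, y}" "x \<in> V" "y \<in> V"
      unfolding simple_graph_def by blast
    then show ?thesis using that(2) by auto
  qed
  have v1U: "v1 \<in> u ` {1..<c}" using v1c c7 by auto
  have v1V: "v1 \<notin> V" using v1U disj by blast
  have v1Vs: "v1 \<in> Vs" using v1U unfolding Vs_def glue_V_def by blast
  have VV': "V \<subseteq> V'" unfolding V'_def del_vertex_V_def Vs_def glue_V_def using v1V by blast
  have wV': "w \<in> V'" using VV' wV by blast
  have EE': "E \<subseteq> E'" unfolding E'_def del_vertex_E_def Es_def glue_E_def using v1V EV by blast
  have E'Es: "E' \<subseteq> Es" unfolding E'_def del_vertex_E_def by blast
  have V'eq: "V' = Vs - {v1}" unfolding V'_def del_vertex_V_def by simp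
  have Ein: "{cyc w u i, cyc w u (Suc i mod c)} \<in> Es" if "i < c" for i
    unfolding Es_def using edge_in[OF that] .
  have E'in: "e \<in> E'" if "e \<in> Es" "v1 \<notin> e" for e
    unfolding E'_def using del_in that by metis
  have Einv: "e \<in> E \<or> (\<exists>i<c. e = {cyc w u i, cyc w u (Suc i mod c)})" if "e \<in> E'" for e
    using that unfolding E'_def del_vertex_E_def Es_def glue_E_def by blast
  have RV: "reach V' E' w y" if "y \<in> V" for y
  proof -
    from conn wV that obtain xs where "walk V E xs" "hd xs = w" "last xs = y"
      unfolding connected_graph_def by blast
    then show ?thesis unfolding reach_def using walk_mono[OF _ VV' EE'] by blast
  qed
  have uneq: "u i \<noteq> u j" if "i \<in> {1..<c}" "j \<in> {1..<c}" "i \<noteq> j" for i j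
    using inj that unfolding inj_on_def by blast
  have inv: "inv_into {1..<c} u (u j) = j" if "j \<in> {1..<c}" for j
    using inv_into_f_f[OF inj that] .
  have uw: "u j \<noteq> w" if "j \<in> {1..<c}" for j using uV[OF that] wV by blast
  have "int (transmission Vs Es w) - int (transmission V' E' w) \<le> -2"
  proof (cases "v1 = u 1")
    case True
    define f where "f x = (if x \<in> V then 0 else int c - int (inv_into {1..<c} u x))" for x
    have fu: "f (u j) = int c - int j" if "j \<in> {1..<c}" for j
      unfolding f_def using uV[OF that] inv[OF that] by simp
    have fw: "f w = 0" unfolding f_def using wV by simp
    have pot: "\<forall>e\<in>E'. \<forall>a b. e = {a, b} \<longrightarrow> \<bar>f a - f b\<bar> \<le> 1"
    proof (intro ballI allI impI)
      fix e a b assume e: "e \<in> E'" and ab: "e = {a, b}"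
      have v1e: "v1 \<notin> e" using e unfolding E'_def del_vertex_E_def by blast
      from Einv[OF e] show "\<bar>f a - f b\<bar> \<le> 1"
      proof
        assume "e \<in> E"
        then have "a \<in> V" "b \<in> V" using EV ab by auto
        then show ?thesis unfolding f_def by simp
      next
        assume "\<exists>i<c. e = {cyc w u i, cyc w u (Suc i mod c)}"
        then obtain i where i: "i < c" "e = {cyc w u i, cyc w u (Suc i mod c)}" by blast
        consider "i = 0" | "i = 1" | "i = c - 1" | "2 \<le> i" "i \<le> c - 2" using c7 i(1) by linarith
        then show ?thesis
        proof cases
          case 1
          have "Suc 0 mod c = 1" using c7 by simp
          then have "cyc w u (Suc i mod c) = u 1" using 1 cycS[of 1] by simp
          then have "v1 \<in> e" using i(2) True by simp
          then show ?thesis using v1e by blast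
        next
          case 2
          have "cyc w u i = u 1" using 2 cycS[of 1] by simp
          then have "v1 \<in> e" using i(2) True by simp
          then show ?thesis using v1e by blast
        next
          case 3
          then have "Suc i mod c = 0" using c7 by simp
          then have "e = {u (c - 1), w}" using i(2) 3 c7 cycS[of "c - 1"] cyc0 by simp
          moreover have "f (u (c - 1)) = 1" using fu[of "c - 1"] c7 by simp
          ultimately have "{a, b} = {u (c - 1), w}" "f (u (c - 1)) = 1" using ab by simp_all
          then show ?thesis using fw unfolding doubleton_eq_iff by auto
        next
          case 4
          then have "Suc i mod c = Suc i" using c7 by simp
          then have "e = {u i, u (Suc i)}" using i(2) 4 cycS[of i] cycS[of "Suc i"] by simp
          moreover have "f (u i) = int c - int i" "f (u (Suc i)) = int c - int (Suc i)"
            using fu[of i] fu[of "Suc i"] 4 c7 by auto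
          ultimately have "{a, b} = {u i, u (Suc i)}" "f (u i) = int c - int i"
              "f (u (Suc i)) = int c - int (Suc i)" using ab by simp_all
          then show ?thesis unfolding doubleton_eq_iff by auto
        qed
      qed
    qed
    have R: "\<forall>y\<in>V'. reach V' E' w y"
    proof -
      have RC: "k < c - 2 \<longrightarrow> reach V' E' w (u (c - 1 - k))" for k
      proof (induction k)
        case 0
        have "{cyc w u (c - 1), cyc w u (Suc (c - 1) mod c)} \<in> Es" by (rule Ein) (use c7 in simp)
        then have "{u (c - 1), w} \<in> Es" using c7 by (simp add: cycS cyc0)
        moreover have "v1 \<notin> {u (c - 1), w}" using True uneq[of 1 "c - 1"] uneq[of "c - 1" 1] c7 v1V wV by auto
        ultimately have "{w, u (c - 1)} \<in> E'" using E'in by (simp add: insert_commute)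
        moreover have "u (c - 1) \<in> V'" using V'eq uVs[of "c - 1"] True uneq[of 1 "c - 1"] uneq[of "c - 1" 1] c7 by auto
        ultimately show ?case using reach_step[OF reach_refl[OF wV']] by simp
      next
        case (Suc k)
        show ?case
        proof
          assume k: "Suc k < c - 2"
          then have IH: "reach V' E' w (u (c - 1 - k))" using Suc.IH by simp
          have "{cyc w u (c - 2 - k), cyc w u (Suc (c - 2 - k) mod c)} \<in> Es" by (rule Ein) (use c7 in simp)
          moreover have "Suc (c - 2 - k) mod c = c - 1 - k" using k c7 by simp
          ultimately have "{u (c - 2 - k), u (c - 1 - k)} \<in> Es" using k by (simp add: cycS)
          moreover have "v1 \<notin> {u (c - 2 - k), u (c - 1 - k)}"
            using True uneq[of 1 "c - 2 - k"] uneq[of "c - 2 - k" 1] uneq[of 1 "c - 1 - k"] uneq[of "c - 1 - k" 1] k c7 by auto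
          ultimately have "{u (c - 1 - k), u (c - 2 - k)} \<in> E'" using E'in by (simp add: insert_commute)
          moreover have "u (c - 2 - k) \<in> V'"
            using V'eq uVs[of "c - 2 - k"] True uneq[of 1 "c - 2 - k"] uneq[of "c - 2 - k" 1] k c7 by auto
          moreover have "c - 1 - Suc k = c - 2 - k" by simp
          ultimately show "reach V' E' w (u (c - 1 - Suc k))" using reach_step[OF IH] by simp
        qed
      qed
      show ?thesis
      proof
        fix y assume y: "y \<in> V'"
        show "reach V' E' w y"
        proof (cases "y \<in> V")
          case True then show ?thesis using RV by blast
        next
          case False
          then obtain j where j: "j \<in> {1..<c}" "y = u j"
            using y unfolding V'_def del_vertex_V_def Vs_def glue_V_def by blast
          then have "j \<noteq> 1" using y True unfolding V'_def del_vertex_V_def by auto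
          then have "c - 1 - (c - 1 - j) = j" "c - 1 - j < c - 2" using j by auto
          then show ?thesis using RC[of "c - 1 - j"] j by simp
        qed
      qed
    qed
    have x2: "u 2 \<in> Vs" "u 2 \<noteq> v1" using uVs[of 2] True uneq[of 2 1] uneq[of 1 2] c7 by auto
    have d1: "dist Vs Es w v1 \<le> 1"
    proof -
      have "{cyc w u 0, cyc w u (Suc 0 mod c)} \<in> Es" by (rule Ein) (use c7 in simp)
      then have "{w, u 1} \<in> Es" using c7 by (simp add: cycS cyc0)
      then have "walk Vs Es [w, u 1]" by (intro walk2 wVs uVs) (use c7 in auto)
      then show ?thesis using dist_le_walk[of Vs Es "[w, u 1]" w v1 1] True by simp
    qed
    have d2: "dist Vs Es w (u 2) \<le> 2"
    proof -
      have "{cyc w u 0, cyc w u (Suc 0 mod c)} \<in> Es" by (rule Ein) (use c7 in simp)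
      then have e1: "{w, u 1} \<in> Es" using c7 by (simp add: cycS cyc0)
      have "{cyc w u 1, cyc w u (Suc 1 mod c)} \<in> Es" by (rule Ein) (use c7 in simp)
      then have e2: "{u 1, u 2} \<in> Es" using c7 by (simp add: cycS numeral_2_eq_2)
      have "walk Vs Es [w, u 1, u 2]" by (intro walk3 wVs uVs e1 e2) (use c7 in auto)
      then show ?thesis using dist_le_walk[of Vs Es "[w, u 1, u 2]" w "u 2" 2] by simp
    qed
    have d3: "dist V' E' w (u 2) \<ge> 5"
    proof -
      have "u 2 \<in> V'" using V'eq x2 by simp
      then have "\<bar>f (u 2) - f w\<bar> \<le> int (dist V' E' w (u 2))"
        using dist_potential[OF _ pot] R by blast
      moreover have "f (u 2) = int c - 2" using fu[of 2] c7 by simp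
      ultimately show ?thesis using fw c7 by simp
    qed
    show ?thesis using key[OF finVs v1Vs x2 d1 d2 d3 V'eq E'Es R] .
  next
    case False
    then have True: "v1 = u (c - 1)" using v1c by simp
    define f where "f x = (if x \<in> V then 0 else int (inv_into {1..<c} u x))" for x
    have fu: "f (u j) = int j" if "j \<in> {1..<c}" for j
      unfolding f_def using uV[OF that] inv[OF that] by simp
    have fw: "f w = 0" unfolding f_def using wV by simp
    have pot: "\<forall>e\<in>E'. \<forall>a b. e = {a, b} \<longrightarrow> \<bar>f a - f b\<bar> \<le> 1"
    proof (intro ballI allI impI)
      fix e a b assume e: "e \<in> E'" and ab: "e = {a, b}"
      have v1e: "v1 \<notin> e" using e unfolding E'_def del_vertex_E_def by blast
      from Einv[OF e] show "\<bar>f a - f b\<bar> \<le> 1"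
      proof
        assume "e \<in> E"
        then have "a \<in> V" "b \<in> V" using EV ab by auto
        then show ?thesis unfolding f_def by simp
      next
        assume "\<exists>i<c. e = {cyc w u i, cyc w u (Suc i mod c)}"
        then obtain i where i: "i < c" "e = {cyc w u i, cyc w u (Suc i mod c)}" by blast
        consider "i = 0" | "i = c - 1" | "i = c - 2" | "1 \<le> i" "i \<le> c - 3" using c7 i(1) by linarith
        then show ?thesis
        proof cases
          case 1
          then have "e = {w, u 1}" using i c7 by (simp add: cycS cyc0)
          moreover have "f (u 1) = 1" using fu[of 1] c7 by simp
          ultimately show ?thesis using ab fw by (auto simp: doubleton_eq_iff)
        next
          case 2
          then have "v1 \<in> e" using i c7 True by (simp add: cycS)
          then show ?thesis using v1e by blast
        next
          case 3
          then have "Suc i mod c = c - 1" using c7 by simp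
          then have "v1 \<in> e" using i 3 c7 True by (simp add: cycS)
          then show ?thesis using v1e by blast
        next
          case 4
          then have "Suc i mod c = Suc i" using c7 by simp
          then have "e = {u i, u (Suc i)}" using i 4 by (simp add: cycS)
          moreover have "f (u i) = int i" "f (u (Suc i)) = int (Suc i)"
            using fu 4 c7 by auto
          ultimately show ?thesis using ab by (auto simp: doubleton_eq_iff)
        qed
      qed
    qed
    have R: "\<forall>y\<in>V'. reach V' E' w y"
    proof -
      have RC: "k < c - 2 \<longrightarrow> reach V' E' w (u (Suc k))" for k
      proof (induction k)
        case 0
        have "{cyc w u 0, cyc w u (Suc 0 mod c)} \<in> Es" by (rule Ein) (use c7 in simp)
        then have "{w, u 1} \<in> Es" using c7 by (simp add: cycS cyc0)
        moreover have "v1 \<notin> {w, u 1}" using True uneq[of 1 "c - 1"] uneq[of "c - 1" 1] c7 v1V wV by auto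
        ultimately have "{w, u 1} \<in> E'" using E'in by simp
        moreover have "u 1 \<in> V'" using V'eq uVs[of 1] True uneq[of 1 "c - 1"] uneq[of "c - 1" 1] c7 by auto
        ultimately show ?case using reach_step[OF reach_refl[OF wV']] by simp
      next
        case (Suc k)
        show ?case
        proof
          assume k: "Suc k < c - 2"
          then have IH: "reach V' E' w (u (Suc k))" using Suc.IH by simp
          have "{cyc w u (Suc k), cyc w u (Suc (Suc k) mod c)} \<in> Es" by (rule Ein) (use k in simp)
          moreover have "Suc (Suc k) mod c = Suc (Suc k)" using k by simp
          ultimately have "{u (Suc k), u (Suc (Suc k))} \<in> Es" by (simp add: cycS)
          moreover have "v1 \<notin> {u (Suc k), u (Suc (Suc k))}"
            using True uneq[of "c - 1" "Suc k"] uneq[of "Suc k" "c - 1"] uneq[of "c - 1" "Suc (Suc k)"] uneq[of "Suc (Suc k)" "c - 1"] k c7 by auto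
          ultimately have "{u (Suc k), u (Suc (Suc k))} \<in> E'" using E'in by simp
          moreover have "u (Suc (Suc k)) \<in> V'"
            using V'eq uVs[of "Suc (Suc k)"] True uneq[of "c - 1" "Suc (Suc k)"] uneq[of "Suc (Suc k)" "c - 1"] k c7 by auto
          ultimately show "reach V' E' w (u (Suc (Suc k)))" using reach_step[OF IH] by simp
        qed
      qed
      show ?thesis
      proof
        fix y assume y: "y \<in> V'"
        show "reach V' E' w y"
        proof (cases "y \<in> V")
          case True then show ?thesis using RV by blast
        next
          case False
          then obtain j where j: "j \<in> {1..<c}" "y = u j"
            using y unfolding V'_def del_vertex_V_def Vs_def glue_V_def by blast
          then have "j \<noteq> c - 1" using y True unfolding V'_def del_vertex_V_def by auto
          then have "Suc (j - 1) = j" "j - 1 < c - 2" using j by auto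
          then show ?thesis using RC[of "j - 1"] j by simp
        qed
      qed
    qed
    have x2: "u (c - 2) \<in> Vs" "u (c - 2) \<noteq> v1" using uVs[of "c - 2"] True uneq[of "c - 2" "c - 1"] uneq[of "c - 1" "c - 2"] c7 by auto
    have e1: "{w, u (c - 1)} \<in> Es"
    proof -
      have "{cyc w u (c - 1), cyc w u (Suc (c - 1) mod c)} \<in> Es" by (rule Ein) (use c7 in simp)
      then show ?thesis using c7 by (simp add: cycS cyc0 insert_commute)
    qed
    have d1: "dist Vs Es w v1 \<le> 1"
    proof -
      have "walk Vs Es [w, u (c - 1)]" by (intro walk2 wVs uVs e1) (use c7 in auto)
      then show ?thesis using dist_le_walk[of Vs Es "[w, u (c - 1)]" w v1 1] True by simp
    qed
    have d2: "dist Vs Es w (u (c - 2)) \<le> 2"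
    proof -
      have "{cyc w u (c - 2), cyc w u (Suc (c - 2) mod c)} \<in> Es" by (rule Ein) (use c7 in simp)
      moreover have "Suc (c - 2) mod c = c - 1" using c7 by simp
      ultimately have e2: "{u (c - 1), u (c - 2)} \<in> Es" using c7 by (simp add: cycS insert_commute)
      have "walk Vs Es [w, u (c - 1), u (c - 2)]" by (intro walk3 wVs uVs e1 e2) (use c7 in auto)
      then show ?thesis using dist_le_walk[of Vs Es "[w, u (c - 1), u (c - 2)]" w "u (c - 2)" 2] by simp
    qed
    have d3: "dist V' E' w (u (c - 2)) \<ge> 5"
    proof -
      have "u (c - 2) \<in> V'" using V'eq x2 by simp
      then have "\<bar>f (u (c - 2)) - f w\<bar> \<le> int (dist V' E' w (u (c - 2)))"
        using dist_potential[OF _ pot] R by blast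
      moreover have "f (u (c - 2)) = int c - 2" using fu[of "c - 2"] c7 by simp
      ultimately show ?thesis using fw c7 by simp
    qed
    show ?thesis using key[OF finVs v1Vs x2 d1 d2 d3 V'eq E'Es R] .
  qed
  then show ?thesis unfolding Vs_def Es_def V'_def E'_def .
qed

end
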